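(* Let $(R,\mathfrak{m})$ be a local integral domain satisfying (R$_1$) whose integral closure $R'$ is a generalized Krull domain, and such that $P \cap R$ is a height one prime of $R$ for every height one prime $P$ of $R'$. Let $S$ be an integral overring of $R$ such that $R \subseteq S$ satisfies going-down. Then $S$ is local.
   Context: "Local" means having a unique maximal ideal; an overring of a domain $R$ is a ring between $R$ and its fraction field. A ring extension $A \subseteq B$ satisfies going-down if whenever $\mathfrak{p} \subset \mathfrak{q}$ are primes of $A$ and $Q$ is a prime of $B$ with $Q \cap A = \mathfrak{q}$, there is a prime $P \subseteq Q$ of $B$ with $P \cap A = \mathfrak{p}$. A ring satisfies (R$_1$) if its localization at every height one prime is a valuation domain. A domain $A$ is a generalized Krull domain if (1) $A = \bigcap A_{\mathfrak{p}}$ over all height one primes $\mathfrak{p}$, (2) every nonzero element lies in only finitely many height one primes, and (3) $A$ satisfies (R$_1$). *)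

theory Defs
  imports Main
begin

text \<open>Integral domains are modelled as subrings of an ambient field of type 'a.\<close>

definition subring :: "'a::field set \<Rightarrow> bool" where
  "subring A \<longleftrightarrow> 0 \<in> A \<and> 1 \<in> A \<and> (\<forall>x\<in>A. \<forall>y\<in>A. x + y \<in> A \<and> x * y \<in> A \<and> - x \<in> A)"

definition ideal_in :: "'a::field set \<Rightarrow> 'a set \<Rightarrow> bool" where
  "ideal_in A I \<longleftrightarrow> I \<subseteq> A \<and> 0 \<in> I \<and> (\<forall>x\<in>I. \<forall>y\<in>I. x + y \<in> I) \<and> (\<forall>a\<in>A. \<forall>x\<in>I. a * x \<in> I)"

definition prime_in :: "'a::field set \<Rightarrow> 'a set \<Rightarrow> bool" where
  "prime_in A P \<longleftrightarrow> ideal_in A P \<and> P \<noteq> A \<and> (\<forall>x\<in>A. \<forall>y\<in>A. x * y \<in> P \<longrightarrow> x \<in> P \<or> y \<in> P)"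

definition maximal_in :: "'a::field set \<Rightarrow> 'a set \<Rightarrow> bool" where
  "maximal_in A M \<longleftrightarrow> ideal_in A M \<and> M \<noteq> A \<and> (\<forall>I. ideal_in A I \<and> M \<subseteq> I \<longrightarrow> I = M \<or> I = A)"

definition local_ring :: "'a::field set \<Rightarrow> bool" where
  "local_ring A \<longleftrightarrow> (\<exists>!M. maximal_in A M)"

definition height_one :: "'a::field set \<Rightarrow> 'a set \<Rightarrow> bool" where
  "height_one A P \<longleftrightarrow> prime_in A P \<and> P \<noteq> {0} \<and> (\<forall>Q. prime_in A Q \<and> Q \<subseteq> P \<longrightarrow> Q = {0} \<or> Q = P)"

definition frac :: "'a::field set \<Rightarrow> 'a set" where
  "frac A = {a / b | a b. a \<in> A \<and> b \<in> A \<and> b \<noteq> 0}"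

definition localization :: "'a::field set \<Rightarrow> 'a set \<Rightarrow> 'a set" where
  "localization A P = {a / b | a b. a \<in> A \<and> b \<in> A \<and> b \<notin> P}"

definition valuation_domain :: "'a::field set \<Rightarrow> bool" where
  "valuation_domain V \<longleftrightarrow> subring V \<and> (\<forall>x\<in>frac V. x \<noteq> 0 \<longrightarrow> x \<in> V \<or> inverse x \<in> V)"

definition integral_over :: "'a::field set \<Rightarrow> 'a \<Rightarrow> bool" where
  "integral_over A x \<longleftrightarrow> (\<exists>n c. (\<forall>i<n. c i \<in> A) \<and> x ^ n + (\<Sum>i<n. c i * x ^ i) = 0)"

definition integral_closure :: "'a::field set \<Rightarrow> 'a set" where
  "integral_closure A = {x \<in> frac A. integral_over A x}"

definition R1 :: "'a::field set \<Rightarrow> bool" where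
  "R1 A \<longleftrightarrow> (\<forall>P. height_one A P \<longrightarrow> valuation_domain (localization A P))"

definition generalized_Krull :: "'a::field set \<Rightarrow> bool" where
  "generalized_Krull A \<longleftrightarrow> subring A
     \<and> A = {x \<in> frac A. \<forall>P. height_one A P \<longrightarrow> x \<in> localization A P}
     \<and> (\<forall>x\<in>A. x \<noteq> 0 \<longrightarrow> finite {P. height_one A P \<and> x \<in> P})
     \<and> R1 A"

definition going_down :: "'a::field set \<Rightarrow> 'a set \<Rightarrow> bool" where
  "going_down A B \<longleftrightarrow> (\<forall>p q Q. prime_in A p \<and> prime_in A q \<and> p \<subset> q \<and> prime_in B Q \<and> Q \<inter> A = q
      \<longrightarrow> (\<exists>P. prime_in B P \<and> P \<subseteq> Q \<and> P \<inter> A = p))"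

end

theory Submission
  imports Defs
begin

lemma sr: assumes "subring A"
  shows sr0: "0 \<in> A" and sr1: "1 \<in> A"
    and sr_add: "x \<in> A \<Longrightarrow> y \<in> A \<Longrightarrow> x + y \<in> A"
    and sr_mult: "x \<in> A \<Longrightarrow> y \<in> A \<Longrightarrow> x * y \<in> A"
    and sr_uminus: "x \<in> A \<Longrightarrow> - x \<in> A"
    and sr_diff: "x \<in> A \<Longrightarrow> y \<in> A \<Longrightarrow> x - y \<in> A"
  using assms unfolding subring_def
  by (metis diff_conv_add_uminus)+

lemma sr_pow: "subring A \<Longrightarrow> x \<in> A \<Longrightarrow> x ^ n \<in> A"
  by (induction n) (auto intro: sr1 sr_mult)

lemma sr_sum: "subring A \<Longrightarrow> (\<And>i. i \<in> F \<Longrightarrow> f i \<in> A) \<Longrightarrow> sum f F \<in> A"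
proof (induction F rule: infinite_finite_induct)
  case (infinite F) then show ?case by (simp add: sr0)
next
  case empty then show ?case by (simp add: sr0)
next
  case (insert x F) then show ?case by (simp add: sr_add)
qed

lemma id_sum: "ideal_in A I \<Longrightarrow> (\<And>i. i \<in> F \<Longrightarrow> f i \<in> I) \<Longrightarrow> sum f F \<in> I"
proof (induction F rule: infinite_finite_induct)
  case (infinite F) then show ?case by (simp add: ideal_in_def)
next
  case empty then show ?case by (simp add: ideal_in_def)
next
  case (insert x F) then show ?case by (simp add: ideal_in_def)
qed

lemma id_mult: "ideal_in A I \<Longrightarrow> a \<in> A \<Longrightarrow> x \<in> I \<Longrightarrow> a * x \<in> I"
  by (simp add: ideal_in_def)

lemma id_mult2: "ideal_in A I \<Longrightarrow> a \<in> A \<Longrightarrow> x \<in> I \<Longrightarrow> x * a \<in> I"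
  by (metis id_mult mult.commute)

lemma id_add: "ideal_in A I \<Longrightarrow> x \<in> I \<Longrightarrow> y \<in> I \<Longrightarrow> x + y \<in> I"
  by (simp add: ideal_in_def)

lemma id_sub: "ideal_in A I \<Longrightarrow> x \<in> I \<Longrightarrow> x \<in> A"
  by (auto simp add: ideal_in_def)

lemma id_uminus: "subring A \<Longrightarrow> ideal_in A I \<Longrightarrow> x \<in> I \<Longrightarrow> - x \<in> I"
  using id_mult[of A I "-1" x] by (simp add: sr1 sr_uminus)

lemma id_diff: "subring A \<Longrightarrow> ideal_in A I \<Longrightarrow> x \<in> I \<Longrightarrow> y \<in> I \<Longrightarrow> x - y \<in> I"
  by (metis diff_conv_add_uminus id_add id_uminus)

lemma id_one: "ideal_in A I \<Longrightarrow> 1 \<in> I \<Longrightarrow> I = A"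
  unfolding ideal_in_def by (metis mult.right_neutral subsetI subset_antisym)

lemma gen_ideal:
  assumes "subring A" "ideal_in A N" "x \<in> A"
  shows "ideal_in A {n + x * s | n s. n \<in> N \<and> s \<in> A}"
proof -
  have "N \<subseteq> A" using assms(2) by (simp add: ideal_in_def)
  show ?thesis unfolding ideal_in_def
  proof (intro conjI ballI)
    show "{n + x * s | n s. n \<in> N \<and> s \<in> A} \<subseteq> A"
      using assms \<open>N \<subseteq> A\<close> by (auto intro!: sr_add sr_mult)
    show "0 \<in> {n + x * s | n s. n \<in> N \<and> s \<in> A}"
      using assms by (auto simp: ideal_in_def intro!: exI[of _ 0] sr0)
  next
    fix u v assume "u \<in> {n + x * s | n s. n \<in> N \<and> s \<in> A}" "v \<in> {n + x * s | n s. n \<in> N \<and> s \<in> A}"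
    then obtain n1 s1 n2 s2 where "u = n1 + x * s1" "n1 \<in> N" "s1 \<in> A" "v = n2 + x * s2" "n2 \<in> N" "s2 \<in> A" by blast
    moreover have "u + v = (n1 + n2) + x * (s1 + s2)" using \<open>u = _\<close> \<open>v = _\<close> by (simp add: algebra_simps)
    moreover have "n1 + n2 \<in> N" using assms(2) \<open>n1 \<in> N\<close> \<open>n2 \<in> N\<close> by (rule id_add)
    moreover have "s1 + s2 \<in> A" using assms(1) \<open>s1 \<in> A\<close> \<open>s2 \<in> A\<close> by (rule sr_add)
    ultimately show "u + v \<in> {n + x * s | n s. n \<in> N \<and> s \<in> A}" by blast
  next
    fix a u assume "a \<in> A" "u \<in> {n + x * s | n s. n \<in> N \<and> s \<in> A}"
    then obtain n1 s1 where "u = n1 + x * s1" "n1 \<in> N" "s1 \<in> A" by blast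
    moreover have "a * u = (a * n1) + x * (a * s1)" using \<open>u = _\<close> by (simp add: algebra_simps)
    moreover have "a * n1 \<in> N" using assms(2) \<open>a \<in> A\<close> \<open>n1 \<in> N\<close> by (rule id_mult)
    moreover have "a * s1 \<in> A" using assms(1) \<open>a \<in> A\<close> \<open>s1 \<in> A\<close> by (rule sr_mult)
    ultimately show "a * u \<in> {n + x * s | n s. n \<in> N \<and> s \<in> A}" by blast
  qed
qed

lemma max_gen:
  assumes "subring A" "maximal_in A N" "x \<in> A" "x \<notin> N"
  obtains n s where "n \<in> N" "s \<in> A" "1 = n + x * s"
proof -
  let ?J = "{n + x * s | n s. n \<in> N \<and> s \<in> A}"
  have id: "ideal_in A N" using assms(2) by (simp add: maximal_in_def)
  have J: "ideal_in A ?J" by (rule gen_ideal[OF assms(1) id assms(3)])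
  have "N \<subseteq> ?J"
  proof
    fix n assume "n \<in> N"
    moreover have "n = n + x * 0" by simp
    ultimately show "n \<in> ?J" using sr0[OF assms(1)] by blast
  qed
  moreover have "x \<in> ?J"
  proof -
    have "x = 0 + x * 1" by simp
    moreover have "0 \<in> N" using id by (simp add: ideal_in_def)
    ultimately show ?thesis using sr1[OF assms(1)] by blast
  qed
  ultimately have "?J = A" using assms(2,4) J unfolding maximal_in_def by blast
  then have "1 \<in> ?J" using assms(1) sr1 by blast
  then show ?thesis using that by blast
qed

lemma max_prime:
  assumes "subring A" "maximal_in A M"
  shows "prime_in A M"
proof -
  have id: "ideal_in A M" and ne: "M \<noteq> A" using assms(2) by (auto simp: maximal_in_def)
  show ?thesis unfolding prime_in_def
  proof (intro conjI id ne ballI impI)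
    fix x y assume xy: "x \<in> A" "y \<in> A" "x * y \<in> M"
    show "x \<in> M \<or> y \<in> M"
    proof (cases "x \<in> M")
      case True then show ?thesis by simp
    next
      case False
      then have "x \<notin> M" .
      then obtain n s where "n \<in> M" "s \<in> A" "1 = n + x * s" using max_gen assms xy by metis
      then have "y = y * n + (x * y) * s" by (metis mult.commute mult.left_commute distrib_left mult.right_neutral)
      moreover have "y * n \<in> M" using id xy(2) \<open>n \<in> M\<close> by (rule id_mult)
      moreover have "(x * y) * s \<in> M" using id \<open>s \<in> A\<close> xy(3) by (rule id_mult2)
      ultimately have "y \<in> M" using id_add[OF id] by metis
      then show ?thesis by simp
    qed
  qed
qed

lemma exists_max:
  assumes "subring A" "ideal_in A I" "I \<noteq> A"
  shows "\<exists>M. maximal_in A M \<and> I \<subseteq> M"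
proof -
  define F where "F = {J. ideal_in A J \<and> I \<subseteq> J \<and> 1 \<notin> J}"
  have IF: "I \<in> F" using assms id_one unfolding F_def by blast
  have "\<forall>C\<in>chains F. \<exists>U\<in>F. \<forall>X\<in>C. X \<subseteq> U"
  proof
    fix C assume C: "C \<in> chains F"
    show "\<exists>U\<in>F. \<forall>X\<in>C. X \<subseteq> U"
    proof (cases "C = {}")
      case True then show ?thesis using IF by blast
    next
      case False
      have CF: "C \<subseteq> F" and ch: "\<forall>X\<in>C. \<forall>Y\<in>C. X \<subseteq> Y \<or> Y \<subseteq> X"
        using C by (auto simp: chains_def chain_subset_def)
      have "\<Union>C \<in> F" unfolding F_def
      proof (intro CollectI conjI)
        show "ideal_in A (\<Union>C)" unfolding ideal_in_def
        proof (intro conjI ballI)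
          show "\<Union>C \<subseteq> A" using CF by (auto simp: F_def ideal_in_def)
          show "0 \<in> \<Union>C" using CF False by (auto simp: F_def ideal_in_def)
        next
          fix x y assume "x \<in> \<Union>C" "y \<in> \<Union>C"
          then obtain X Y where "X \<in> C" "Y \<in> C" "x \<in> X" "y \<in> Y" by blast
          with ch have "\<exists>Z\<in>C. x \<in> Z \<and> y \<in> Z" by blast
          then obtain Z where "Z \<in> C" "x \<in> Z" "y \<in> Z" by blast
          then have "ideal_in A Z" using CF by (auto simp: F_def)
          then have "x + y \<in> Z" using \<open>x \<in> Z\<close> \<open>y \<in> Z\<close> by (rule id_add)
          then show "x + y \<in> \<Union>C" using \<open>Z \<in> C\<close> by blast
        next
          fix a x assume "a \<in> A" "x \<in> \<Union>C"
          then obtain Z where "Z \<in> C" "x \<in> Z" by blast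
          then have "ideal_in A Z" using CF by (auto simp: F_def)
          then have "a * x \<in> Z" using \<open>a \<in> A\<close> \<open>x \<in> Z\<close> by (rule id_mult)
          then show "a * x \<in> \<Union>C" using \<open>Z \<in> C\<close> by blast
        qed
        show "I \<subseteq> \<Union>C" using CF False by (auto simp: F_def)
        show "1 \<notin> \<Union>C" using CF by (auto simp: F_def)
      qed
      then show ?thesis by blast
    qed
  qed
  from Zorn_Lemma2[OF this] obtain M where MF: "M \<in> F" and mx: "\<forall>X\<in>F. M \<subseteq> X \<longrightarrow> X = M" by blast
  have "maximal_in A M" unfolding maximal_in_def
  proof (intro conjI allI impI)
    show "ideal_in A M" using MF by (simp add: F_def)
    show "M \<noteq> A" using MF assms(1) sr1 by (auto simp: F_def)
  next
    fix J assume J: "ideal_in A J \<and> M \<subseteq> J"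
    show "J = M \<or> J = A"
    proof (cases "1 \<in> J")
      case True then show ?thesis using J id_one by blast
    next
      case False then have "J \<in> F" using J MF by (auto simp: F_def)
      then show ?thesis using mx J by blast
    qed
  qed
  then show ?thesis using MF by (auto simp: F_def)
qed

lemma int_inv:
  fixes y :: "'a::field"
  assumes V: "subring V" and c: "\<forall>i<n. c i \<in> V" and eq: "y ^ n + (\<Sum>i<n. c i * y ^ i) = 0"
    and y0: "y \<noteq> 0" and iv: "inverse y \<in> V"
  shows "y \<in> V"
proof -
  have "n \<noteq> 0"
  proof
    assume "n = 0" then show False using eq by simp
  qed
  then obtain m where n: "n = Suc m" by (cases n) auto
  define z where "z = inverse y"
  have zy: "z * y = 1" using y0 by (simp add: z_def)
  have zyk: "z ^ k * y ^ k = 1" for k by (metis power_mult_distrib power_one zy)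
  have "z ^ m * (y ^ n + (\<Sum>i<n. c i * y ^ i)) = 0" using eq by simp
  moreover have "z ^ m * y ^ n = y" using zyk[of m] by (simp add: n algebra_simps)
  moreover have "z ^ m * (c i * y ^ i) = c i * z ^ (m - i)" if "i < n" for i
  proof -
    have "z ^ m = z ^ (m - i) * z ^ i" using that n by (simp flip: power_add)
    then show ?thesis using zyk[of i] by (simp add: algebra_simps)
  qed
  ultimately have "y + (\<Sum>i<n. c i * z ^ (m - i)) = 0"
    by (simp add: distrib_left sum_distrib_left)
  then have "y = - (\<Sum>i<n. c i * z ^ (m - i))" by (simp add: eq_neg_iff_add_eq_0)
  moreover have "(\<Sum>i<n. c i * z ^ (m - i)) \<in> V"
    using V c iv by (auto intro!: sr_sum sr_mult sr_pow simp: z_def)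
  ultimately show ?thesis using V sr_uminus by metis
qed

lemma pow_cong:
  assumes "subring A" "ideal_in A N" "u \<in> A" "v \<in> A" "u - v \<in> N"
  shows "u ^ k - v ^ k \<in> N"
proof (induction k)
  case 0 then show ?case using assms(2) by (simp add: ideal_in_def)
next
  case (Suc k)
  have "u ^ Suc k - v ^ Suc k = u * (u ^ k - v ^ k) + v ^ k * (u - v)" by (simp add: algebra_simps)
  moreover have "u * (u ^ k - v ^ k) \<in> N" using assms(2,3) Suc by (rule id_mult)
  moreover have "v ^ k * (u - v) \<in> N" using assms(2) sr_pow[OF assms(1,4)] assms(5) by (rule id_mult)
  ultimately show ?case using id_add[OF assms(2)] by metis
qed

lemma contract_max:
  assumes R: "subring R" and S: "subring S" and RS: "R \<subseteq> S"
    and int: "\<forall>x\<in>S. integral_over R x"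
    and mR: "maximal_in R m" and mall: "\<forall>I. ideal_in R I \<and> I \<noteq> R \<longrightarrow> I \<subseteq> m"
    and N: "maximal_in S N"
  shows "N \<inter> R = m"
proof -
  have idN: "ideal_in S N" using N by (simp add: maximal_in_def)
  have N1: "1 \<notin> N" using N id_one by (fastforce simp: maximal_in_def)
  have idm: "ideal_in R m" and m1: "1 \<notin> m" using mR id_one by (fastforce simp: maximal_in_def)+
  have "ideal_in R (N \<inter> R)" using idN RS R unfolding ideal_in_def by (auto intro: sr0 sr_add sr_mult)
  moreover have "N \<inter> R \<noteq> R" using N1 sr1[OF R] by blast
  ultimately have qm: "N \<inter> R \<subseteq> m" using mall by blast
  have "m \<subseteq> N \<inter> R"
  proof
    fix a assume am: "a \<in> m"
    have aR: "a \<in> R" using am idm by (simp add: ideal_in_def subset_iff)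
    show "a \<in> N \<inter> R"
    proof (rule ccontr)
      assume "a \<notin> N \<inter> R"
      then have "a \<notin> N" using aR by blast
      then obtain n s where nN: "n \<in> N" and sS: "s \<in> S" and one: "1 = n + a * s"
        using max_gen[OF S N] aR RS by blast
      obtain k c where c: "\<forall>i<k. c i \<in> R" and eq: "s ^ k + (\<Sum>i<k. c i * s ^ i) = 0"
        using int sS by (auto simp: integral_over_def)
      define u where "u = a * s"
      have uS: "u \<in> S" using aR RS sS S by (auto simp: u_def intro: sr_mult)
      have "u - 1 = - n" using one by (simp add: u_def algebra_simps)
      then have u1: "u - 1 \<in> N" using id_uminus[OF S idN nN] by simp
      have "a ^ k * (s ^ k + (\<Sum>i<k. c i * s ^ i)) = 0" using eq by simp
      moreover have "a ^ k * s ^ k = u ^ k" by (simp add: u_def power_mult_distrib)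
      moreover have "a ^ k * (c i * s ^ i) = c i * a ^ (k - i) * u ^ i" if "i < k" for i
      proof -
        have "a ^ k = a ^ (k - i) * a ^ i" using that by (simp flip: power_add)
        then show ?thesis by (simp add: u_def power_mult_distrib algebra_simps)
      qed
      ultimately have E: "u ^ k + (\<Sum>i<k. c i * a ^ (k - i) * u ^ i) = 0"
        by (simp add: distrib_left sum_distrib_left)
      define t where "t = 1 + (\<Sum>i<k. c i * a ^ (k - i))"
      have "(u ^ k - 1) + (\<Sum>i<k. (c i * a ^ (k - i)) * (u ^ i - 1))
            = (u ^ k + (\<Sum>i<k. c i * a ^ (k - i) * u ^ i)) - t"
        by (simp add: t_def right_diff_distrib sum_subtractf algebra_simps)
      also have "\<dots> = - t" using E by simp
      finally have tN': "- t = (u ^ k - 1) + (\<Sum>i<k. (c i * a ^ (k - i)) * (u ^ i - 1))" by simp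
      have "u ^ k - 1 ^ k \<in> N" by (rule pow_cong[OF S idN uS sr1[OF S]]) (use u1 in simp)
      moreover have "(\<Sum>i<k. (c i * a ^ (k - i)) * (u ^ i - 1)) \<in> N"
      proof (rule id_sum[OF idN])
        fix i assume "i \<in> {..<k}"
        then have "c i * a ^ (k - i) \<in> S" using c aR RS S by (auto intro!: sr_mult sr_pow)
        moreover have "u ^ i - 1 ^ i \<in> N" by (rule pow_cong[OF S idN uS sr1[OF S]]) (use u1 in simp)
        ultimately show "(c i * a ^ (k - i)) * (u ^ i - 1) \<in> N" using idN id_mult by fastforce
      qed
      ultimately have "- t \<in> N" using tN' id_add[OF idN] by simp
      then have "t \<in> N" using id_uminus[OF S idN] by fastforce
      moreover have "t \<in> R" using c aR R by (auto simp: t_def intro!: sr_add sr1 sr_sum sr_mult sr_pow)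
      ultimately have tm: "t \<in> m" using qm by blast
      have sm: "(\<Sum>i<k. c i * a ^ (k - i)) \<in> m"
      proof (rule id_sum[OF idm])
        fix i assume "i \<in> {..<k}"
        then have "k - i = Suc (k - i - 1)" by simp
        then have "a ^ (k - i) = a ^ (k - i - 1) * a" by (metis power_Suc2)
        moreover have "a ^ (k - i - 1) * a \<in> m" using idm sr_pow[OF R aR] am by (rule id_mult)
        ultimately have "a ^ (k - i) \<in> m" by simp
        then show "c i * a ^ (k - i) \<in> m" using idm c \<open>i \<in> {..<k}\<close> id_mult by blast
      qed
      have "1 = t - (\<Sum>i<k. c i * a ^ (k - i))" by (simp add: t_def)
      then have "1 \<in> m" using id_diff[OF R idm tm sm] by simp
      then show False using m1 by simp
    qed
  qed
  then show ?thesis using qm by blast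
qed

lemma prime_one: "prime_in A p \<Longrightarrow> 1 \<notin> p"
  unfolding prime_in_def using id_one by blast

lemma loc_sub: assumes "subring R" "prime_in R p" shows "R \<subseteq> localization R p"
proof
  fix a assume "a \<in> R"
  moreover have "1 \<in> R" using assms(1) by (rule sr1)
  moreover have "a = a / 1" by simp
  ultimately show "a \<in> localization R p" unfolding localization_def using prime_one[OF assms(2)] by blast
qed

lemma S_in_loc:
  assumes R: "subring R" and SF: "S \<subseteq> frac R" and int: "\<forall>x\<in>S. integral_over R x"
    and val: "valuation_domain (localization R p)" and pp: "prime_in R p"
  shows "S \<subseteq> localization R p"
proof
  fix s assume sS: "s \<in> S"
  let ?V = "localization R p"
  have V: "subring ?V" using val by (simp add: valuation_domain_def)
  have RV: "R \<subseteq> ?V" using loc_sub[OF R pp] .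
  show "s \<in> ?V"
  proof (cases "s = 0")
    case True then show ?thesis using sr0[OF V] by simp
  next
    case False
    obtain a b where ab: "s = a / b" "a \<in> R" "b \<in> R" "b \<noteq> 0" using SF sS by (auto simp: frac_def)
    then have "s \<in> frac ?V" using RV unfolding frac_def by blast
    then have "s \<in> ?V \<or> inverse s \<in> ?V" using val False by (simp add: valuation_domain_def)
    moreover
    { assume iv: "inverse s \<in> ?V"
      obtain k c where c: "\<forall>i<k. c i \<in> R" and eq: "s ^ k + (\<Sum>i<k. c i * s ^ i) = 0"
        using int sS by (auto simp: integral_over_def)
      have "s \<in> ?V" by (rule int_inv[OF V _ eq False iv]) (use c RV in blast) }
    ultimately show ?thesis by blast
  qed
qed

theorem lemma4p2:
  fixes R S :: "'a::field set"
  assumes "subring R"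
    and "local_ring R"
    and "R1 R"
    and "generalized_Krull (integral_closure R)"
    and "\<forall>P. height_one (integral_closure R) P \<longrightarrow> height_one R (P \<inter> R)"
    and "subring S" and "R \<subseteq> S" and "S \<subseteq> frac R"
    and "\<forall>x\<in>S. integral_over R x"
    and "going_down R S"
  shows "local_ring S"
proof -
  note R = assms(1) and S = assms(6) and RS = assms(7) and SF = assms(8) and int = assms(9)
  define R' where "R' = integral_closure R"
  have RR': "R \<subseteq> R'"
  proof
    fix r assume r: "r \<in> R"
    have "r = r / 1" by simp
    then have "r \<in> frac R" unfolding frac_def using r sr1[OF R] by fastforce
    moreover have "integral_over R r" unfolding integral_over_def
      using r sr_uminus[OF R r] by (auto intro!: exI[of _ 1] exI[of _ "\<lambda>_. - r"])
    ultimately show "r \<in> R'" by (simp add: R'_def integral_closure_def)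
  qed
  have fracRR': "frac R \<subseteq> frac R'" using RR' unfolding frac_def by blast
  have Krull: "R' = {x \<in> frac R'. \<forall>P. height_one R' P \<longrightarrow> x \<in> localization R' P}"
    using assms(4) by (simp add: R'_def generalized_Krull_def)
  obtain m where mR: "maximal_in R m" and muniq: "\<And>M. maximal_in R M \<Longrightarrow> M = m"
    using assms(2) by (auto simp: local_ring_def)
  have mall: "\<forall>I. ideal_in R I \<and> I \<noteq> R \<longrightarrow> I \<subseteq> m"
    using exists_max[OF R] muniq by blast
  have F3: "\<And>N. maximal_in S N \<Longrightarrow> N \<inter> R = m"
    using contract_max[OF R S RS int mR mall] by blast
  have ex: "\<exists>M. maximal_in S M"
  proof -
    have "ideal_in S {0}" using sr0[OF S] by (auto simp: ideal_in_def)
    moreover have "{0} \<noteq> S" using sr1[OF S] by auto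
    ultimately show ?thesis using exists_max[OF S] by blast
  qed
  have uniq: "N1 = N2" if N1: "maximal_in S N1" and N2: "maximal_in S N2" for N1 N2
  proof (rule ccontr)
    assume ne: "N1 \<noteq> N2"
    have id1: "ideal_in S N1" and id2: "ideal_in S N2" and N2S: "N2 \<noteq> S"
      using N1 N2 by (auto simp: maximal_in_def)
    have "\<not> N1 \<subseteq> N2"
    proof
      assume "N1 \<subseteq> N2"
      then have "N2 = N1 \<or> N2 = S" using N1 id2 by (auto simp: maximal_in_def)
      then show False using ne N2S by auto
    qed
    then obtain x0 where x01: "x0 \<in> N1" and x02: "x0 \<notin> N2" by blast
    have x0S: "x0 \<in> S" using x01 id1 by (simp add: ideal_in_def subset_iff)
    obtain n s where nN: "n \<in> N2" and sS: "s \<in> S" and one: "1 = n + x0 * s"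
      using max_gen[OF S N2 x0S x02] by blast
    define x where "x = x0 * s"
    have x1: "x \<in> N1" unfolding x_def using id1 sS x01 by (rule id_mult2)
    have xS: "x \<in> S" using x1 id1 by (simp add: ideal_in_def subset_iff)
    have N21: "1 \<notin> N2" using N2S id_one[OF id2] by blast
    have x2: "x \<notin> N2"
    proof
      assume "x \<in> N2"
      then have "n + x \<in> N2" using id_add[OF id2 nN] by blast
      then show False using one N21 by (simp add: x_def)
    qed
    have x0: "x \<noteq> 0" using x2 id2 by (auto simp: ideal_in_def)
    have ixR': "inverse x \<in> R'"
    proof -
      obtain a b where ab: "x = a / b" "a \<in> R" "b \<in> R" "b \<noteq> 0" using SF xS by (auto simp: frac_def)
      then have "a \<noteq> 0" using x0 by auto
      then have "inverse x = b / a" using ab(1) by simp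
      then have "inverse x \<in> frac R" using ab \<open>a \<noteq> 0\<close> unfolding frac_def by blast
      then have fr: "inverse x \<in> frac R'" using fracRR' by blast
      have "inverse x \<in> localization R' P" if hP: "height_one R' P" for P
      proof -
        define p where "p = P \<inter> R"
        have hp: "height_one R p" using assms(5) hP by (simp add: p_def R'_def)
        have pp: "prime_in R p" using hp by (simp add: height_one_def)
        have val: "valuation_domain (localization R p)" using assms(3) hp by (simp add: R1_def)
        have SV: "S \<subseteq> localization R p" by (rule S_in_loc[OF R SF int val pp])
        obtain a' b' where ab': "x = a' / b'" "a' \<in> R" "b' \<in> R" "b' \<notin> p"
          using SV xS by (auto simp: localization_def)
        have p0: "0 \<in> p" using pp by (simp add: prime_in_def ideal_in_def)
        have "\<exists>P2. prime_in S P2 \<and> P2 \<subseteq> N2 \<and> P2 \<inter> R = p"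
        proof (cases "p = m")
          case True then show ?thesis using max_prime[OF S N2] F3[OF N2] by blast
        next
          case False
          have "p \<subseteq> m" using mall pp by (simp add: prime_in_def)
          then have "p \<subset> m" using False by blast
          moreover have "prime_in R m" using max_prime[OF R mR] .
          moreover have "prime_in S N2" using max_prime[OF S N2] .
          ultimately show ?thesis using assms(10) pp F3[OF N2] unfolding going_down_def by blast
        qed
        then obtain P2 where P2: "prime_in S P2" "P2 \<subseteq> N2" "P2 \<inter> R = p" by blast
        have a'p: "a' \<notin> p"
        proof
          assume a'p: "a' \<in> p"
          have "b' \<noteq> 0" using ab'(4) p0 by auto
          then have "b' * x = a'" using ab'(1) by simp
          then have "b' * x \<in> P2" using a'p P2(3) by blast
          moreover have "b' \<in> S" using ab'(3) RS by blast
          ultimately have "b' \<in> P2 \<or> x \<in> P2" using P2(1) xS unfolding prime_in_def by blast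
          then show False using ab'(3,4) P2 x2 by blast
        qed
        then have "a' \<noteq> 0" using p0 by auto
        then have ix: "inverse x = b' / a'" using ab'(1) by simp
        have "a' \<notin> P" using a'p ab'(2) by (simp add: p_def)
        then show ?thesis unfolding localization_def using ix ab' RR' by blast
      qed
      then show ?thesis using fr Krull by blast
    qed
    obtain k c where c: "\<forall>i<k. c i \<in> R" and eq: "inverse x ^ k + (\<Sum>i<k. c i * inverse x ^ i) = 0"
      using ixR' by (auto simp: R'_def integral_closure_def integral_over_def)
    have "inverse x \<in> S"
      by (rule int_inv[OF S _ eq]) (use c RS x0 xS in auto)
    then have "inverse x * x \<in> N1" using id_mult[OF id1 _ x1] by blast
    then have "1 \<in> N1" using x0 by simp
    then show False using N1 id_one[OF id1] by (auto simp: maximal_in_def)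
  qed
  show ?thesis unfolding local_ring_def using ex uniq by blast
qed

end
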